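(* Let $n\ge1$, $\gamma=(\gamma_1,\dots,\gamma_n)$ with $\gamma_i>0$, let $k\in\{-1,-3,-5,\dots\}$, and let $f$ be B-polyharmonic of order $\frac{1-k}{2}$ and even with respect to each variable. Then one of the solutions of the Cauchy problem $$(B_k)_tu=(\Delta_\gamma)_xu,\ x\in\mathbb{R}^n_+,\ t>0,\qquad u(x,0;k)=f(x),\quad u_t(x,0;k)=0$$ is given by $u(x,t;-1)=f(x)$ for $k=-1$, and for $k=-3,-5,\dots$ by $$u(x,t;k)=f(x)+\sum_{h=1}^{-\frac{k+1}{2}}\frac{\Delta_\gamma^h f}{(k+1)(k+3)\cdots(k+2h-1)}\,\frac{t^{2h}}{2\cdot4\cdots 2h}.$$
   Context: $\mathbb{R}^n_+=\{x\in\mathbb{R}^n:x_i>0\ \forall i\}$. $(B_\nu)_t=\partial_t^2+\frac{\nu}{t}\partial_t$; $\Delta_\gamma=(\Delta_\gamma)_x=\sum_{i=1}^n\big(\partial_{x_i}^2+\frac{\gamma_i}{x_i}\partial_{x_i}\big)$. $C^m_{ev}$: functions on $\mathbb{R}^n_+$, $m$ times differentiable, with all derivatives continuous up to $x_i=0$, and $\frac{\partial^{2j+1}f}{\partial x_i^{2j+1}}=0$ at $x_i=0$ for all $i$ and integers $j\ge0$ with $2j+1\le m$. A function $f$ is B-polyharmonic of order $p$ if $f\in C^{2p}_{ev}$ and $\Delta_\gamma^p f=0$. *)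

theory Defs
  imports "HOL-Analysis.Analysis"
begin

text \<open>Points of R^n are vectors real^'n (the finite index type 'n has CARD('n) = n >= 1 elements).\<close>

definition Rplus :: "(real^'n) set" where
  "Rplus = {x. \<forall>i. x $ i > 0}"

definition Rplus_cl :: "(real^'n) set" where
  "Rplus_cl = {x. \<forall>i. x $ i \<ge> 0}"

definition upd :: "real^'n \<Rightarrow> 'n \<Rightarrow> real \<Rightarrow> real^'n" where
  "upd x i s = (\<chi> j. if j = i then s else x $ j)"

definition partial :: "'n \<Rightarrow> (real^'n \<Rightarrow> real) \<Rightarrow> real^'n \<Rightarrow> real" where
  "partial i g x = deriv (\<lambda>s. g (upd x i s)) (x $ i)"

fun dlist :: "'n list \<Rightarrow> (real^'n \<Rightarrow> real) \<Rightarrow> real^'n \<Rightarrow> real" where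
  "dlist [] g = g"
| "dlist (i # is) g = partial i (dlist is g)"

definition Cev :: "nat \<Rightarrow> (real^'n \<Rightarrow> real) \<Rightarrow> bool" where
  "Cev m g \<longleftrightarrow>
     (\<forall>is i x. length is < m \<longrightarrow> x \<in> Rplus \<longrightarrow>
        (\<lambda>s. dlist is g (upd x i s)) differentiable (at (x $ i))) \<and>
     (\<forall>is. length is \<le> m \<longrightarrow>
        continuous_on Rplus (dlist is g) \<and>
        (\<exists>h. continuous_on Rplus_cl h \<and> (\<forall>x\<in>Rplus. h x = dlist is g x))) \<and>
     (\<forall>i j x. 2 * j + 1 \<le> m \<longrightarrow> x \<in> Rplus_cl \<longrightarrow> x $ i = 0 \<longrightarrow>
        (dlist (replicate (2 * j + 1) i) g \<longlongrightarrow> 0) (at x within Rplus))"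

definition Lap :: "real^'n \<Rightarrow> (real^'n \<Rightarrow> real) \<Rightarrow> real^'n \<Rightarrow> real" where
  "Lap \<gamma> g x = (\<Sum>i\<in>UNIV. partial i (partial i g) x + \<gamma> $ i / x $ i * partial i g x)"

definition Bpolyharmonic :: "real^'n \<Rightarrow> nat \<Rightarrow> (real^'n \<Rightarrow> real) \<Rightarrow> bool" where
  "Bpolyharmonic \<gamma> p g \<longleftrightarrow> Cev (2 * p) g \<and> (\<forall>x\<in>Rplus. (Lap \<gamma> ^^ p) g x = 0)"

definition Bess :: "real \<Rightarrow> (real \<Rightarrow> real) \<Rightarrow> real \<Rightarrow> real" where
  "Bess \<nu> v t = deriv (deriv v) t + \<nu> / t * deriv v t"

text \<open>the candidate solution u(x,t;k); for k = -1 the sum is empty and u = f\<close>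
definition ucand :: "real^'n \<Rightarrow> int \<Rightarrow> (real^'n \<Rightarrow> real) \<Rightarrow> real^'n \<Rightarrow> real \<Rightarrow> real" where
  "ucand \<gamma> k f x t = f x +
     (\<Sum>h = 1..nat (- (k + 1) div 2).
        (Lap \<gamma> ^^ h) f x / (\<Prod>l = 1..h. of_int (k + 2 * int l - 1))
          * t ^ (2 * h) / (\<Prod>l = 1..h. 2 * real l))"

definition solves_Cauchy :: "real^'n \<Rightarrow> int \<Rightarrow> (real^'n \<Rightarrow> real) \<Rightarrow> (real^'n \<Rightarrow> real \<Rightarrow> real) \<Rightarrow> bool" where
  "solves_Cauchy \<gamma> k f v \<longleftrightarrow>
     (\<forall>x\<in>Rplus. \<forall>t>0.
        (\<lambda>s. v x s) differentiable (at t) \<and>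
        deriv (\<lambda>s. v x s) differentiable (at t) \<and>
        (\<forall>i. (\<lambda>s. v (upd x i s) t) differentiable (at (x $ i)) \<and>
             (\<lambda>s. partial i (\<lambda>y. v y t) (upd x i s)) differentiable (at (x $ i))) \<and>
        Bess (of_int k) (\<lambda>s. v x s) t = Lap \<gamma> (\<lambda>y. v y t) x) \<and>
     (\<forall>x\<in>Rplus. v x 0 = f x \<and> ((\<lambda>s. v x s) has_real_derivative 0) (at 0 within {0..}))"

end

theory Submission
  imports Defs
begin

lemma upd_nth[simp]: "upd x i s $ j = (if j = i then s else x $ j)"
  by (simp add: upd_def)
lemma upd_same[simp]: "upd x i (x $ i) = x"
  by (simp add: upd_def vec_eq_iff)
lemma upd_upd[simp]: "upd (upd x i s) i r = upd x i r"
  by (simp add: upd_def vec_eq_iff)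
lemma upd_Rplus: "x \<in> Rplus \<Longrightarrow> s > 0 \<Longrightarrow> upd x i s \<in> Rplus"
  by (simp add: Rplus_def)

lemma ev_pos: "x \<in> Rplus \<Longrightarrow> eventually (\<lambda>s. s > 0) (nhds (x $ i))"
  using eventually_nhds_in_open[of "{0<..}" "x $ i"] by (auto simp: Rplus_def)

lemma ev_eq:
  fixes g h :: "real^'n \<Rightarrow> real"
  assumes "x \<in> Rplus" "\<forall>y\<in>Rplus. g y = h y"
  shows "eventually (\<lambda>s. g (upd x i s) = h (upd x i s)) (nhds (x $ i))"
  using ev_pos[OF assms(1), of i] by eventually_elim (use assms upd_Rplus in auto)

lemma partial_cong:
  fixes g h :: "real^'n \<Rightarrow> real"
  assumes "x \<in> Rplus" "\<forall>y\<in>Rplus. g y = h y"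
  shows "partial i g x = partial i h x"
  unfolding partial_def by (rule deriv_cong_ev[OF ev_eq[OF assms]]) simp

lemma diff_cong:
  fixes g h :: "real^'n \<Rightarrow> real"
  assumes "x \<in> Rplus" "\<forall>y\<in>Rplus. g y = h y"
    "(\<lambda>s. g (upd x i s)) differentiable (at (x $ i))"
  shows "(\<lambda>s. h (upd x i s)) differentiable (at (x $ i))"
proof -
  have "DERIV (\<lambda>s. g (upd x i s)) (x $ i) :> deriv (\<lambda>s. g (upd x i s)) (x $ i)"
    using assms(3) DERIV_deriv_iff_real_differentiable by blast
  hence "DERIV (\<lambda>s. h (upd x i s)) (x $ i) :> deriv (\<lambda>s. g (upd x i s)) (x $ i)"
    using DERIV_cong_ev[OF refl ev_eq[OF assms(1,2)] refl] by blast
  thus ?thesis using real_differentiable_def by blast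
qed

fun Dk :: "nat \<Rightarrow> (real^'n \<Rightarrow> real) \<Rightarrow> bool" where
  "Dk 0 g = True"
| "Dk (Suc m) g = ((\<forall>i. \<forall>x\<in>Rplus. (\<lambda>s. g (upd x i s)) differentiable (at (x $ i)))
      \<and> (\<forall>i. Dk m (partial i g)))"

lemma Dk_cong: fixes g h :: "real^'n \<Rightarrow> real" shows "Dk m g \<Longrightarrow> \<forall>y\<in>Rplus. g y = h y \<Longrightarrow> Dk m h"
proof (induction m arbitrary: g h)
  case 0 then show ?case by simp
next
  case (Suc m)
  show ?case
  proof (simp, intro conjI allI ballI)
    fix i :: 'n and x :: "real^'n" assume "x \<in> Rplus"
    then show "(\<lambda>s. h (upd x i s)) differentiable (at (x $ i))"
      using diff_cong[of x g h i] Suc.prems by simp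
  next
    fix i :: 'n
    show "Dk m (partial i h)"
    proof (rule Suc.IH)
      show "Dk m (partial i g)" using Suc.prems(1) by simp
      show "\<forall>y\<in>Rplus. partial i g y = partial i h y"
        using Suc.prems(2) partial_cong by blast
    qed
  qed
qed

lemma Dk_mono: "Dk (Suc m) g \<Longrightarrow> Dk m g"
  by (induction m arbitrary: g) auto

lemma Dk_le: "m \<le> n \<Longrightarrow> Dk n g \<Longrightarrow> Dk m g"
proof (induction n rule: dec_induct)
  case base then show ?case .
next
  case (step n) then show ?case using Dk_mono[of n g] by blast
qed


lemma DERIVd: "(f::real\<Rightarrow>real) differentiable (at t) \<Longrightarrow> DERIV f t :> deriv f t"
  using DERIV_deriv_iff_real_differentiable by blast

lemma partial_add:
  fixes g h :: "real^'n \<Rightarrow> real"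
  assumes "(\<lambda>s. g (upd x i s)) differentiable (at (x $ i))"
    "(\<lambda>s. h (upd x i s)) differentiable (at (x $ i))"
  shows "partial i (\<lambda>y. g y + h y) x = partial i g x + partial i h x"
  unfolding partial_def
  by (rule DERIV_imp_deriv, rule DERIV_add[OF DERIVd[OF assms(1)] DERIVd[OF assms(2)]])

lemma partial_mult:
  fixes g h :: "real^'n \<Rightarrow> real"
  assumes "(\<lambda>s. g (upd x i s)) differentiable (at (x $ i))"
    "(\<lambda>s. h (upd x i s)) differentiable (at (x $ i))"
  shows "partial i (\<lambda>y. g y * h y) x = partial i g x * h x + g x * partial i h x"
  unfolding partial_def
  using DERIV_imp_deriv[OF DERIV_mult[OF DERIVd[OF assms(1)] DERIVd[OF assms(2)]]]
  by (simp add: mult.commute)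

lemma partial_const: "partial i (\<lambda>y. c) x = 0"
  unfolding partial_def by (rule DERIV_imp_deriv) (rule DERIV_const)

lemma Dk_const: "Dk m (\<lambda>y::real^'n. c)"
proof (induction m arbitrary: c)
  case 0 then show ?case by simp
next
  case (Suc m)
  have "partial i (\<lambda>y::real^'n. c) = (\<lambda>y. 0)" for i by (rule ext) (rule partial_const)
  then show ?case using Suc.IH by (simp del: Dk.simps(1))
qed

lemma Dk_add: fixes g h :: "real^'n \<Rightarrow> real"
  shows "Dk m g \<Longrightarrow> Dk m h \<Longrightarrow> Dk m (\<lambda>y. g y + h y)"
proof (induction m arbitrary: g h)
  case 0 then show ?case by simp
next
  case (Suc m)
  have gd: "\<forall>i. \<forall>x\<in>Rplus. (\<lambda>s. g (upd x i s)) differentiable (at (x $ i))"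
    and gp: "\<forall>i. Dk m (partial i g)" using Suc.prems(1) by simp_all
  have hd: "\<forall>i. \<forall>x\<in>Rplus. (\<lambda>s. h (upd x i s)) differentiable (at (x $ i))"
    and hp: "\<forall>i. Dk m (partial i h)" using Suc.prems(2) by simp_all
  show ?case
  proof (simp only: Dk.simps, intro conjI allI ballI)
    fix i :: 'n and x :: "real^'n" assume "x \<in> Rplus"
    then show "(\<lambda>s. g (upd x i s) + h (upd x i s)) differentiable (at (x $ i))"
      using gd hd by (intro differentiable_add) auto
  next
    fix i :: 'n
    show "Dk m (partial i (\<lambda>y. g y + h y))"
    proof (rule Dk_cong)
      show "Dk m (\<lambda>y. partial i g y + partial i h y)" using Suc.IH gp hp by blast
      show "\<forall>y\<in>Rplus. partial i g y + partial i h y = partial i (\<lambda>y. g y + h y) y"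
      proof
        fix y :: "real^'n" assume "y \<in> Rplus"
        then show "partial i g y + partial i h y = partial i (\<lambda>y. g y + h y) y"
          using partial_add[of g y i h] gd hd by metis
      qed
    qed
  qed
qed

lemma Dk_mult: fixes g h :: "real^'n \<Rightarrow> real"
  shows "Dk m g \<Longrightarrow> Dk m h \<Longrightarrow> Dk m (\<lambda>y. g y * h y)"
proof (induction m arbitrary: g h)
  case 0 then show ?case by simp
next
  case (Suc m)
  have gd: "\<forall>i. \<forall>x\<in>Rplus. (\<lambda>s. g (upd x i s)) differentiable (at (x $ i))"
    and gp: "\<forall>i. Dk m (partial i g)" using Suc.prems(1) by simp_all
  have hd: "\<forall>i. \<forall>x\<in>Rplus. (\<lambda>s. h (upd x i s)) differentiable (at (x $ i))"
    and hp: "\<forall>i. Dk m (partial i h)" using Suc.prems(2) by simp_all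
  have g: "Dk m g" and h: "Dk m h" using Suc.prems Dk_mono by blast+
  show ?case
  proof (simp only: Dk.simps, intro conjI allI ballI)
    fix i :: 'n and x :: "real^'n" assume "x \<in> Rplus"
    then show "(\<lambda>s. g (upd x i s) * h (upd x i s)) differentiable (at (x $ i))"
      using gd hd by (intro differentiable_mult) auto
  next
    fix i :: 'n
    show "Dk m (partial i (\<lambda>y. g y * h y))"
    proof (rule Dk_cong)
      have "Dk m (\<lambda>y. partial i g y * h y)" using Suc.IH gp h by blast
      moreover have "Dk m (\<lambda>y. g y * partial i h y)" using Suc.IH hp g by blast
      ultimately show "Dk m (\<lambda>y. partial i g y * h y + g y * partial i h y)"
        by (rule Dk_add)
      show "\<forall>y\<in>Rplus. partial i g y * h y + g y * partial i h y = partial i (\<lambda>y. g y * h y) y"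
      proof
        fix y :: "real^'n" assume "y \<in> Rplus"
        then show "partial i g y * h y + g y * partial i h y = partial i (\<lambda>y. g y * h y) y"
          using partial_mult[of g y i h] gd hd by metis
      qed
    qed
  qed
qed

lemma Dk_sum: fixes g :: "'a \<Rightarrow> real^'n \<Rightarrow> real"
  shows "finite A \<Longrightarrow> (\<forall>a\<in>A. Dk m (g a)) \<Longrightarrow> Dk m (\<lambda>y. \<Sum>a\<in>A. g a y)"
proof (induction A rule: finite_induct)
  case empty then show ?case using Dk_const[of m 0] by simp
next
  case (insert a A)
  then have "Dk m (g a)" "Dk m (\<lambda>y. \<Sum>a\<in>A. g a y)" by simp_all
  then have "Dk m (\<lambda>y. g a y + (\<Sum>a\<in>A. g a y))" by (rule Dk_add)
  then show ?case using insert.hyps by simp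
qed

lemma inv_deriv:
  assumes "s > 0"
  shows "DERIV (\<lambda>s::real. c * inverse s ^ e) s :> (- c * real e) * inverse s ^ Suc e"
proof -
  have "DERIV (\<lambda>s::real. c * inverse s ^ e) s :> c * (real e * inverse s ^ (e - 1) * (- (inverse s * inverse s)))"
    using assms by (auto intro!: derivative_eq_intros)
  moreover have "c * (real e * inverse s ^ (e - 1) * (- (inverse s * inverse s))) = (- c * real e) * inverse s ^ Suc e"
    using assms by (cases e) (simp_all add: power2_eq_square inverse_mult_distrib field_simps)
  ultimately show ?thesis by metis
qed

lemma Dk_inv: "Dk m (\<lambda>y::real^'n. c * inverse (y $ j) ^ e)"
proof (induction m arbitrary: c e)
  case 0 then show ?case by simp
next
  case (Suc m)
  show ?case
  proof (simp only: Dk.simps, intro conjI allI ballI)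
    fix i :: 'n and x :: "real^'n" assume x: "x \<in> Rplus"
    show "(\<lambda>s. c * inverse (upd x i s $ j) ^ e) differentiable (at (x $ i))"
    proof (cases "i = j")
      case True
      have "x $ i > 0" using x by (simp add: Rplus_def)
      moreover have "(\<lambda>s. c * inverse (upd x i s $ j) ^ e) = (\<lambda>s. c * inverse s ^ e)"
        using True by (simp add: fun_eq_iff)
      ultimately show ?thesis using inv_deriv[of "x $ i" c e] real_differentiable_def by metis
    next
      case False
      then have "(\<lambda>s. c * inverse (upd x i s $ j) ^ e) = (\<lambda>s. c * inverse (x $ j) ^ e)"
        by (simp add: fun_eq_iff)
      then show ?thesis by simp
    qed
  next
    fix i :: 'n
    show "Dk m (partial i (\<lambda>y. c * inverse (y $ j) ^ e))"
    proof (cases "i = j")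
      case True
      show ?thesis
      proof (rule Dk_cong)
        show "Dk m (\<lambda>y::real^'n. (- c * real e) * inverse (y $ j) ^ Suc e)" by (rule Suc.IH)
        show "\<forall>y\<in>Rplus. (- c * real e) * inverse (y $ j) ^ Suc e = partial i (\<lambda>y. c * inverse (y $ j) ^ e) y"
        proof
          fix y :: "real^'n" assume "y \<in> Rplus"
          then have "y $ j > 0" by (simp add: Rplus_def)
          moreover have "(\<lambda>s. c * inverse (upd y i s $ j) ^ e) = (\<lambda>s. c * inverse s ^ e)"
            using True by (simp add: fun_eq_iff)
          ultimately show "(- c * real e) * inverse (y $ j) ^ Suc e = partial i (\<lambda>y. c * inverse (y $ j) ^ e) y"
            unfolding partial_def using True DERIV_imp_deriv[OF inv_deriv[of "y $ j" c e]] by simp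
        qed
      qed
    next
      case False
      have "partial i (\<lambda>y::real^'n. c * inverse (y $ j) ^ e) y = 0" for y
      proof -
        have "(\<lambda>s. c * inverse (upd y i s $ j) ^ e) = (\<lambda>s. c * inverse (y $ j) ^ e)"
          using False by (simp add: fun_eq_iff)
        then show ?thesis unfolding partial_def by (simp add: DERIV_imp_deriv[OF DERIV_const])
      qed
      then have "partial i (\<lambda>y::real^'n. c * inverse (y $ j) ^ e) = (\<lambda>y. 0)" by (rule ext)
      then show ?thesis using Dk_const by simp
    qed
  qed
qed

lemma Lap_eq: "Lap \<gamma> g = (\<lambda>x. \<Sum>i\<in>UNIV. partial i (partial i g) x + (\<gamma> $ i * inverse (x $ i) ^ 1) * partial i g x)"
  by (rule ext) (simp add: Lap_def divide_inverse)

lemma Dk_Lap: fixes g :: "real^'n \<Rightarrow> real"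
  assumes "Dk (Suc (Suc m)) g" shows "Dk m (Lap \<gamma> g)"
proof -
  have "Dk m (\<lambda>x. partial i (partial i g) x + (\<gamma> $ i * inverse (x $ i) ^ 1) * partial i g x)" for i
  proof (rule Dk_add)
    have "Dk (Suc m) (partial i g)" using assms by simp
    then show "Dk m (partial i (partial i g))" by simp
    show "Dk m (\<lambda>x. (\<gamma> $ i * inverse (x $ i) ^ 1) * partial i g x)"
      by (rule Dk_mult[OF Dk_inv]) (use \<open>Dk (Suc m) (partial i g)\<close> Dk_mono in blast)
  qed
  then show ?thesis unfolding Lap_eq by (intro Dk_sum) auto
qed

lemma partial_sum:
  fixes g :: "'a \<Rightarrow> real^'n \<Rightarrow> real"
  assumes "finite A" "\<forall>a\<in>A. (\<lambda>s. g a (upd x i s)) differentiable (at (x $ i))"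
  shows "partial i (\<lambda>y. \<Sum>a\<in>A. c a * g a y) x = (\<Sum>a\<in>A. c a * partial i (g a) x)"
  unfolding partial_def
  by (rule DERIV_imp_deriv, rule DERIV_sum, rule DERIV_cmult, rule DERIVd) (use assms in auto)

lemma Lap_sum:
  fixes g :: "'a \<Rightarrow> real^'n \<Rightarrow> real"
  assumes A: "finite A" and D: "\<forall>a\<in>A. Dk 2 (g a)" and x: "x \<in> Rplus"
  shows "Lap \<gamma> (\<lambda>y. \<Sum>a\<in>A. c a * g a y) x = (\<Sum>a\<in>A. c a * Lap \<gamma> (g a) x)"
proof -
  have d1: "\<forall>a\<in>A. (\<lambda>s. g a (upd y i s)) differentiable (at (y $ i))" if "y \<in> Rplus" for y i
    using D that by (simp add: numeral_2_eq_2)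
  have d2: "\<forall>a\<in>A. (\<lambda>s. partial i (g a) (upd y i s)) differentiable (at (y $ i))" if "y \<in> Rplus" for y i
    using D that by (simp add: numeral_2_eq_2)
  have p1: "partial i (\<lambda>y. \<Sum>a\<in>A. c a * g a y) y = (\<Sum>a\<in>A. c a * partial i (g a) y)" if "y \<in> Rplus" for y i
    using partial_sum[OF A d1[OF that]] .
  have p2: "partial i (partial i (\<lambda>y. \<Sum>a\<in>A. c a * g a y)) x = (\<Sum>a\<in>A. c a * partial i (partial i (g a)) x)" for i
  proof -
    have "partial i (partial i (\<lambda>y. \<Sum>a\<in>A. c a * g a y)) x = partial i (\<lambda>y. \<Sum>a\<in>A. c a * partial i (g a) y) x"
      by (rule partial_cong[OF x]) (use p1 in auto)
    also have "\<dots> = (\<Sum>a\<in>A. c a * partial i (partial i (g a)) x)"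
      by (rule partial_sum[OF A d2[OF x]])
    finally show ?thesis .
  qed
  have "Lap \<gamma> (\<lambda>y. \<Sum>a\<in>A. c a * g a y) x =
     (\<Sum>i\<in>UNIV. (\<Sum>a\<in>A. c a * partial i (partial i (g a)) x) + \<gamma> $ i / x $ i * (\<Sum>a\<in>A. c a * partial i (g a) x))"
    unfolding Lap_def using p1[OF x] p2 by simp
  also have "\<dots> = (\<Sum>i\<in>UNIV. \<Sum>a\<in>A. c a * (partial i (partial i (g a)) x + \<gamma> $ i / x $ i * partial i (g a) x))"
    by (simp add: sum.distrib sum_distrib_left algebra_simps)
  also have "\<dots> = (\<Sum>a\<in>A. \<Sum>i\<in>UNIV. c a * (partial i (partial i (g a)) x + \<gamma> $ i / x $ i * partial i (g a) x))"
    by (rule sum.swap)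
  also have "\<dots> = (\<Sum>a\<in>A. c a * Lap \<gamma> (g a) x)"
    by (simp add: Lap_def sum_distrib_left)
  finally show ?thesis .
qed

lemma Cev_Dk: fixes f :: "real^'n \<Rightarrow> real"
  assumes "Cev m f" shows "length is + j \<le> m \<Longrightarrow> Dk j (dlist is f)"
proof (induction j arbitrary: "is")
  case 0 then show ?case by simp
next
  case (Suc j)
  have "\<forall>i x. length is < m \<longrightarrow> x \<in> Rplus \<longrightarrow>
        (\<lambda>s. dlist is f (upd x i s)) differentiable (at (x $ i))"
    using assms unfolding Cev_def by blast
  moreover have "Dk j (dlist (i # is) f)" for i using Suc.IH[of "i # is"] Suc.prems by simp
  ultimately show ?case using Suc.prems by simp
qed

lemma Dk_Lapow: fixes f :: "real^'n \<Rightarrow> real"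
  assumes "Dk (2 * p) f" shows "h \<le> p \<Longrightarrow> Dk (2 * (p - h)) ((Lap \<gamma> ^^ h) f)"
proof (induction h)
  case 0 then show ?case using assms by simp
next
  case (Suc h)
  have "2 * (p - h) = Suc (Suc (2 * (p - Suc h)))" using Suc.prems by simp
  then show ?case using Suc Dk_Lap[of "2 * (p - Suc h)" "(Lap \<gamma> ^^ h) f" \<gamma>] by simp
qed

lemma poly_deriv:
  "((\<lambda>s. \<Sum>h\<in>A. C h * s ^ e h) has_real_derivative (\<Sum>h\<in>A. (C h * real (e h)) * s ^ (e h - 1))) (at s)"
  by (rule DERIV_sum) (use DERIV_cmult[OF DERIV_pow] in \<open>simp add: mult.assoc\<close>)

lemma poly_deriv_fun:
  "deriv (\<lambda>s. \<Sum>h\<in>A. C h * s ^ e h) = (\<lambda>s. \<Sum>h\<in>A. (C h * real (e h)) * s ^ (e h - 1))"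
  by (rule ext, rule DERIV_imp_deriv, rule poly_deriv)

theorem theorem3p3:
  fixes \<gamma> :: "real^'n" and k :: int and f :: "real^'n \<Rightarrow> real"
  assumes "\<forall>i. \<gamma> $ i > 0"
    and "k \<le> -1" and "odd k"
    and "Bpolyharmonic \<gamma> (nat ((1 - k) div 2)) f"
    and "\<forall>i x. f (upd x i (- (x $ i))) = f x"
  shows "solves_Cauchy \<gamma> k f (ucand \<gamma> k f)"
proof -
  define N where "N = nat (- (k + 1) div 2)"
  define p where "p = nat ((1 - k) div 2)"
  obtain m where km: "k = 2 * m + 1" using assms(3) by (metis oddE)
  have kN: "k = - 2 * int N - 1" using km assms(2) unfolding N_def by simp
  have pN: "p = Suc N" using km assms(2) unfolding N_def p_def by simp
  have Df: "Dk (2 * p) f"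
    using Cev_Dk[of "2 * p" f "[]" "2 * p"] assms(4) unfolding Bpolyharmonic_def p_def by simp
  define G where "G h = (Lap \<gamma> ^^ h) f" for h
  have DG: "Dk 2 (G h)" if "h \<le> N" for h
  proof (rule Dk_le)
    show "Dk (2 * (p - h)) (G h)" unfolding G_def using Dk_Lapow[OF Df, of h \<gamma>] that pN by simp
    show "2 \<le> 2 * (p - h)" using that pN by simp
  qed
  have GSuc: "Lap \<gamma> (G h) = G (Suc h)" for h unfolding G_def by simp
  have Gp: "G (Suc N) x = 0" if "x \<in> Rplus" for x
    using assms(4) that pN unfolding Bpolyharmonic_def G_def p_def by simp
  define P where "P h = (\<Prod>l = 1..h. of_int (k + 2 * int l - 1) :: real)" for h
  define Q where "Q h = (\<Prod>l = 1..h. 2 * real l)" for h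
  define b where "b h = inverse (P h * Q h)" for h
  have b0: "b 0 = 1" unfolding b_def P_def Q_def by simp
  have u_eq: "ucand \<gamma> k f y t = (\<Sum>h\<le>N. (b h * t ^ (2 * h)) * G h y)" for y t
  proof -
    have "(\<Sum>h\<le>N. (b h * t ^ (2 * h)) * G h y) = (b 0 * t ^ (2 * 0)) * G 0 y + (\<Sum>h=Suc 0..N. (b h * t ^ (2 * h)) * G h y)"
      unfolding atLeast0AtMost[symmetric] by (rule sum.atLeast_Suc_atMost) simp
    also have "\<dots> = f y + (\<Sum>h=1..N. (Lap \<gamma> ^^ h) f y / (\<Prod>l = 1..h. of_int (k + 2 * int l - 1)) * t ^ (2 * h) / (\<Prod>l = 1..h. 2 * real l))"
      by (simp add: b0 G_def b_def P_def Q_def divide_inverse inverse_mult_distrib mult_ac)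
    finally show ?thesis unfolding ucand_def N_def by simp
  qed
  have bstep: "b (Suc j) * (2 * real (Suc j)) * (2 * real j + 1 + of_int k) = b j" if "j < N" for j
  proof -
    have P: "P (Suc j) = P j * (2 * real j + 1 + of_int k)"
      unfolding P_def by (subst prod.nat_ivl_Suc') (simp_all add: algebra_simps)
    have Q: "Q (Suc j) = Q j * (2 * real (Suc j))"
      unfolding Q_def by (subst prod.nat_ivl_Suc') (simp_all add: algebra_simps)
    have nz: "2 * real j + 1 + of_int k \<noteq> 0" using that kN by simp
    have nz2: "2 + 2 * real j \<noteq> 0" by simp
    have e: "inverse (2 * real j + 1 + real_of_int k) * (inverse (2 + 2 * real j) *
       ((2 + 2 * real j) * (2 * real j + 1 + real_of_int k))) = 1"
    proof -
      have "inverse (2 + 2 * real j) * ((2 + 2 * real j) * (2 * real j + 1 + real_of_int k)) = 2 * real j + 1 + real_of_int k"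
        using nz2 by (simp add: mult.assoc[symmetric])
      then show ?thesis using nz by (metis left_inverse)
    qed
    show ?thesis unfolding b_def P Q using nz e
      by (simp add: inverse_mult_distrib)
  qed
  show ?thesis
    unfolding solves_Cauchy_def
  proof (intro conjI ballI allI impI)
    fix x :: "real^'n" and t :: real assume x: "x \<in> Rplus" and t: "t > 0"
    define C where "C h = b h * G h x" for h
    have vt: "(\<lambda>s. ucand \<gamma> k f x s) = (\<lambda>s. \<Sum>h\<in>{..N}. C h * s ^ (2 * h))"
      by (rule ext) (simp add: u_eq C_def mult_ac)
    have d1: "deriv (\<lambda>s. ucand \<gamma> k f x s) = (\<lambda>s. \<Sum>h\<in>{..N}. (C h * real (2 * h)) * s ^ (2 * h - 1))"
      unfolding vt by (rule poly_deriv_fun)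
    have d2: "deriv (deriv (\<lambda>s. ucand \<gamma> k f x s)) = (\<lambda>s. \<Sum>h\<in>{..N}. (C h * real (2 * h) * real (2 * h - 1)) * s ^ (2 * h - 1 - 1))"
      unfolding d1 by (rule poly_deriv_fun)
    show "(\<lambda>s. ucand \<gamma> k f x s) differentiable (at t)"
      unfolding vt using poly_deriv real_differentiable_def by blast
    show "deriv (\<lambda>s. ucand \<gamma> k f x s) differentiable (at t)"
      unfolding d1 using poly_deriv[of "\<lambda>h. C h * real (2 * h)" "\<lambda>h. 2 * h - 1" "{..N}" t]
        real_differentiable_def by blast
    have ufun: "(\<lambda>y. ucand \<gamma> k f y t) = (\<lambda>y. \<Sum>h\<in>{..N}. (b h * t ^ (2 * h)) * G h y)"
      by (rule ext) (simp add: u_eq)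
    have Du: "Dk 2 (\<lambda>y. ucand \<gamma> k f y t)"
      unfolding ufun by (intro Dk_sum ballI Dk_mult[OF Dk_const] DG) auto
    then have Du1: "\<forall>i. \<forall>x\<in>Rplus. (\<lambda>s. ucand \<gamma> k f (upd x i s) t) differentiable (at (x $ i))"
      and Du2: "\<forall>i. \<forall>x\<in>Rplus. (\<lambda>s. partial i (\<lambda>y. ucand \<gamma> k f y t) (upd x i s)) differentiable (at (x $ i))"
      by (simp_all add: numeral_2_eq_2)
    fix i
    show "(\<lambda>s. ucand \<gamma> k f (upd x i s) t) differentiable (at (x $ i))" using Du1 x by blast
    show "(\<lambda>s. partial i (\<lambda>y. ucand \<gamma> k f y t) (upd x i s)) differentiable (at (x $ i))" using Du2 x by blast
  next
    fix x :: "real^'n" and t :: real assume x: "x \<in> Rplus" and t: "t > 0"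
    define C where "C h = b h * G h x" for h
    have vt: "(\<lambda>s. ucand \<gamma> k f x s) = (\<lambda>s. \<Sum>h\<in>{..N}. C h * s ^ (2 * h))"
      by (rule ext) (simp add: u_eq C_def mult_ac)
    have d1: "deriv (\<lambda>s. ucand \<gamma> k f x s) = (\<lambda>s. \<Sum>h\<in>{..N}. (C h * real (2 * h)) * s ^ (2 * h - 1))"
      unfolding vt by (rule poly_deriv_fun)
    have d2: "deriv (deriv (\<lambda>s. ucand \<gamma> k f x s)) = (\<lambda>s. \<Sum>h\<in>{..N}. (C h * real (2 * h) * real (2 * h - 1)) * s ^ (2 * h - 1 - 1))"
      unfolding d1 by (rule poly_deriv_fun)
    define T where "T h = C h * real (2 * h) * (real (2 * h - 1) * t ^ (2 * h - 1 - 1) + of_int k / t * t ^ (2 * h - 1))" for h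
    have "Bess (of_int k) (\<lambda>s. ucand \<gamma> k f x s) t = (\<Sum>h\<in>{..N}. T h)"
      unfolding Bess_def d2 unfolding d1 T_def
      by (simp add: sum_distrib_left sum.distrib algebra_simps)
    also have "\<dots> = (\<Sum>h<Suc N. T h)" by (simp add: lessThan_Suc_atMost)
    also have "\<dots> = T 0 + (\<Sum>j<N. T (Suc j))" by (rule sum.lessThan_Suc_shift)
    also have "\<dots> = (\<Sum>j<N. (b j * t ^ (2 * j)) * G (Suc j) x)"
    proof -
      have "T 0 = 0" unfolding T_def by simp
      moreover have "T (Suc j) = (b j * t ^ (2 * j)) * G (Suc j) x" if "j < N" for j
      proof -
        have e1: "2 * Suc j - 1 = Suc (2 * j)" and e2: "2 * Suc j - 1 - 1 = 2 * j" by simp_all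
        have e3: "of_int k / t * t ^ Suc (2 * j) = of_int k * t ^ (2 * j)" using t by simp
        have "T (Suc j) = C (Suc j) * (2 * real (Suc j)) * (2 * real j + 1 + of_int k) * t ^ (2 * j)"
          unfolding T_def e1 e2 e3 by (simp add: algebra_simps)
        also have "\<dots> = (b (Suc j) * (2 * real (Suc j)) * (2 * real j + 1 + of_int k)) * t ^ (2 * j) * G (Suc j) x"
          unfolding C_def by (simp add: mult_ac)
        also have "\<dots> = (b j * t ^ (2 * j)) * G (Suc j) x" using bstep[OF that] by simp
        finally show ?thesis .
      qed
      ultimately show ?thesis by simp
    qed
    also have "\<dots> = (\<Sum>h<Suc N. (b h * t ^ (2 * h)) * G (Suc h) x)"
      using Gp[OF x] by simp
    also have "\<dots> = (\<Sum>h\<in>{..N}. (b h * t ^ (2 * h)) * Lap \<gamma> (G h) x)"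
      by (simp add: lessThan_Suc_atMost GSuc)
    also have "\<dots> = Lap \<gamma> (\<lambda>y. \<Sum>h\<in>{..N}. (b h * t ^ (2 * h)) * G h y) x"
      by (rule Lap_sum[symmetric]) (use DG x in auto)
    also have "\<dots> = Lap \<gamma> (\<lambda>y. ucand \<gamma> k f y t) x"
      by (simp add: u_eq)
    finally show "Bess (of_int k) (\<lambda>s. ucand \<gamma> k f x s) t = Lap \<gamma> (\<lambda>y. ucand \<gamma> k f y t) x" .
  next
    fix x :: "real^'n" assume x: "x \<in> Rplus"
    show "ucand \<gamma> k f x 0 = f x" unfolding ucand_def by (simp add: sum.neutral)
    define C where "C h = b h * G h x" for h
    have vt: "(\<lambda>s. ucand \<gamma> k f x s) = (\<lambda>s. \<Sum>h\<in>{..N}. C h * s ^ (2 * h))"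
      by (rule ext) (simp add: u_eq C_def mult_ac)
    have "(\<Sum>h\<in>{..N}. (C h * real (2 * h)) * 0 ^ (2 * h - 1)) = (0::real)"
      by (rule sum.neutral) auto
    then show "((\<lambda>s. ucand \<gamma> k f x s) has_real_derivative 0) (at 0 within {0..})"
      unfolding vt using poly_deriv[of C "\<lambda>h. 2 * h" "{..N}" 0]
      by (metis has_field_derivative_at_within)
  qed
qed

end
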